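(* Let $(X,\sigma)$ be a primitive aperiodic $S$-adic subshift based on substitutions $\chi_i:\mathcal A_i\to\mathcal A_{i-1}^+$, $i\in\mathbb N$. If for every $k\in\mathbb N$ there are $i<j$ and letters $a\in\mathcal A_{i-1}$, $b\in\mathcal A_j$ such that $a^k$ is a subword of $\chi_i\circ\cdots\circ\chi_j(b)$, then $(X,\sigma)$ is not linearly recurrent.
   Context: Given finite alphabets $\mathcal A_i$ and substitutions $\chi_i:\mathcal A_i\to\mathcal A_{i-1}^+$ (extended to words by concatenation), the $S$-adic subshift $X$ is the shift-orbit closure of the set of accumulation points of $\{\chi_1\circ\cdots\circ\chi_n(a):n\in\mathbb N,a\in\mathcal A_n\}$, with $\sigma$ the left shift. It is primitive if for every $m\in\mathbb N$ there is $n\ge m$ such that for all $a\in\mathcal A_n$ the word $\chi_m\circ\cdots\circ\chi_n(a)$ contains every letter of $\mathcal A_{m-1}$. It is aperiodic if there are no $x\in X$, $k\in\mathbb N$ with $\sigma^kx=x$. It is linearly recurrent if there is $L$ such that for every $x\in X$ every subword $w$ of $x$ reappears in $x$ with gap at most $L|w|$. *)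

theory Defs
  imports Main "HOL-Library.Sublist"
begin

text \<open>Letters of all alphabets live in one type 'a; the alphabet at level i is the
  set A i. Points of the subshift are two-sided sequences int => 'a.\<close>

definition subst_word :: "('a \<Rightarrow> 'a list) \<Rightarrow> 'a list \<Rightarrow> 'a list" where
  "subst_word f w = concat (map f w)"

text \<open>comp_subst chi m n w = (chi m o ... o chi n)(w) for m <= n; identity if n < m.\<close>
fun comp_subst :: "(nat \<Rightarrow> 'a \<Rightarrow> 'a list) \<Rightarrow> nat \<Rightarrow> nat \<Rightarrow> 'a list \<Rightarrow> 'a list" where
  "comp_subst chi m 0 w = w"
| "comp_subst chi m (Suc n) w =
     (if Suc n < m then w else comp_subst chi m n (subst_word (chi (Suc n)) w))"

definition valid_sadic :: "(nat \<Rightarrow> 'a set) \<Rightarrow> (nat \<Rightarrow> 'a \<Rightarrow> 'a list) \<Rightarrow> bool" where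
  "valid_sadic A chi \<longleftrightarrow>
     (\<forall>i. finite (A i) \<and> A i \<noteq> {}) \<and>
     (\<forall>i\<ge>1. \<forall>a\<in>A i. chi i a \<noteq> [] \<and> set (chi i a) \<subseteq> A (i - 1))"

definition word_at :: "(int \<Rightarrow> 'a) \<Rightarrow> int \<Rightarrow> nat \<Rightarrow> 'a list" where
  "word_at x i n = map (\<lambda>k. x (i + int k)) [0..<n]"

definition shift :: "(int \<Rightarrow> 'a) \<Rightarrow> (int \<Rightarrow> 'a)" where
  "shift x = (\<lambda>i. x (i + 1))"

text \<open>The S-adic subshift: shift-orbit closure of the accumulation points of the words
  chi_1 o ... o chi_n (a), i.e. all two-sided sequences every finite subword of which
  occurs in chi_1 o ... o chi_n (a), a in A n, for arbitrarily large n.\<close>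
definition sadic_subshift :: "(nat \<Rightarrow> 'a set) \<Rightarrow> (nat \<Rightarrow> 'a \<Rightarrow> 'a list) \<Rightarrow> (int \<Rightarrow> 'a) set" where
  "sadic_subshift A chi =
     {x. \<forall>i len N. \<exists>n\<ge>N. \<exists>a\<in>A n. sublist (word_at x i len) (comp_subst chi 1 n [a])}"

definition primitive_sadic :: "(nat \<Rightarrow> 'a set) \<Rightarrow> (nat \<Rightarrow> 'a \<Rightarrow> 'a list) \<Rightarrow> bool" where
  "primitive_sadic A chi \<longleftrightarrow>
     (\<forall>m\<ge>1. \<exists>n\<ge>m. \<forall>a\<in>A n. A (m - 1) \<subseteq> set (comp_subst chi m n [a]))"

definition aperiodic :: "(int \<Rightarrow> 'a) set \<Rightarrow> bool" where
  "aperiodic X \<longleftrightarrow> \<not> (\<exists>x\<in>X. \<exists>k::nat. k \<ge> 1 \<and> (shift ^^ k) x = x)"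

definition linearly_recurrent :: "(int \<Rightarrow> 'a) set \<Rightarrow> bool" where
  "linearly_recurrent X \<longleftrightarrow>
     (\<exists>L::nat. \<forall>x\<in>X. \<forall>i. \<forall>n::nat. n \<ge> 1 \<longrightarrow>
        (\<forall>p. \<exists>q. p < q \<and> q \<le> p + int (L * n) \<and> word_at x q n = word_at x i n))"

end

theory Submission
  imports Defs
begin


lemma subst_word_append[simp]: "subst_word f (v @ w) = subst_word f v @ subst_word f w"
  by (simp add: subst_word_def)

lemma subst_word_Nil[simp]: "subst_word f [] = []"
  by (simp add: subst_word_def)

lemma comp_append: "comp_subst chi m n (v @ w) = comp_subst chi m n v @ comp_subst chi m n w"
  by (induction n arbitrary: v w) auto

lemma comp_Nil[simp]: "comp_subst chi m n [] = []"
  by (induction n) auto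

lemma comp_concat: "comp_subst chi m n w = concat (map (\<lambda>c. comp_subst chi m n [c]) w)"
proof (induction w)
  case Nil then show ?case by simp
next
  case (Cons a w)
  have "comp_subst chi m n (a # w) = comp_subst chi m n [a] @ comp_subst chi m n w"
    using comp_append[of chi m n "[a]" w] by simp
  then show ?case using Cons by simp
qed

lemma comp_replicate: "comp_subst chi m n (replicate k a) = concat (replicate k (comp_subst chi m n [a]))"
proof (induction k)
  case 0 then show ?case by simp
next
  case (Suc k)
  have "comp_subst chi m n (replicate (Suc k) a) = comp_subst chi m n [a] @ comp_subst chi m n (replicate k a)"
    using comp_append[of chi m n "[a]" "replicate k a"] by simp
  then show ?case using Suc by simp
qed

lemma comp_sublist: "sublist v w \<Longrightarrow> sublist (comp_subst chi m n v) (comp_subst chi m n w)"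
  unfolding sublist_def by (auto simp: comp_append) blast

lemma comp_id: "comp_subst chi (Suc j) j w = w"
  by (cases j) auto

lemma comp_comp: "m \<le> Suc j \<Longrightarrow> j \<le> n \<Longrightarrow>
   comp_subst chi m n w = comp_subst chi m j (comp_subst chi (Suc j) n w)"
proof (induction n arbitrary: w)
  case 0 then show ?case by (simp add: comp_id)
next
  case (Suc n)
  show ?case
  proof (cases "j = Suc n")
    case True then show ?thesis by (simp add: comp_id)
  next
    case False
    then have "j \<le> n" using Suc by simp
    then show ?thesis using Suc by simp
  qed
qed

lemma comp_valid:
  assumes "valid_sadic A chi"
  shows "1 \<le> m \<Longrightarrow> m \<le> Suc n \<Longrightarrow> set w \<subseteq> A n \<Longrightarrow>
    set (comp_subst chi m n w) \<subseteq> A (m - 1) \<and> (w \<noteq> [] \<longrightarrow> comp_subst chi m n w \<noteq> [])"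
proof (induction n arbitrary: w)
  case 0 then show ?case by simp
next
  case (Suc n)
  show ?case
  proof (cases "m = Suc (Suc n)")
    case True then show ?thesis using Suc by simp
  next
    case False
    then have m: "m \<le> Suc n" using Suc by simp
    have s: "set (subst_word (chi (Suc n)) w) \<subseteq> A n"
      using assms Suc.prems(3) unfolding valid_sadic_def subst_word_def by fastforce
    have ne: "w \<noteq> [] \<longrightarrow> subst_word (chi (Suc n)) w \<noteq> []"
      using assms Suc.prems(3) unfolding valid_sadic_def subst_word_def
      by (cases w) auto
    show ?thesis using Suc.IH[OF Suc.prems(1) m s] ne m by auto
  qed
qed


lemma core:
  assumes v: "valid_sadic A chi" and pr: "primitive_sadic A chi"
    and h: "\<forall>k::nat. k \<ge> 1 \<longrightarrow> (\<exists>i j a b. 1 \<le> i \<and> i < j \<and> a \<in> A (i - 1) \<and> b \<in> A j \<and>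
            sublist (replicate k a) (comp_subst chi i j [b]))"
    and k: "k \<ge> 1"
  shows "\<exists>u n0. u \<noteq> [] \<and> (\<forall>c\<in>A n0. sublist (concat (replicate k u)) (comp_subst chi 1 n0 [c]))"
proof -
  obtain i j a b where ij: "1 \<le> i" "i < j" "a \<in> A (i - 1)" "b \<in> A j"
    and sb: "sublist (replicate k a) (comp_subst chi i j [b])"
    using h k by blast
  obtain n0 where n0: "n0 \<ge> Suc j" "\<forall>c\<in>A n0. A j \<subseteq> set (comp_subst chi (Suc j) n0 [c])"
    using pr unfolding primitive_sadic_def by (metis diff_Suc_1 le_add1 plus_1_eq_Suc)
  define u where "u = comp_subst chi 1 (i - 1) [a]"
  have une: "u \<noteq> []" unfolding u_def using comp_valid[OF v, of 1 "i - 1" "[a]"] ij by auto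
  have s1: "sublist (concat (replicate k u)) (comp_subst chi 1 j [b])"
  proof -
    have "comp_subst chi 1 j [b] = comp_subst chi 1 (i - 1) (comp_subst chi (Suc (i - 1)) j [b])"
      by (rule comp_comp) (use ij in auto)
    also have "Suc (i - 1) = i" using ij by simp
    finally have e: "comp_subst chi 1 j [b] = comp_subst chi 1 (i - 1) (comp_subst chi i j [b])" .
    show ?thesis unfolding e u_def comp_replicate[symmetric] by (rule comp_sublist[OF sb])
  qed
  have "\<forall>c\<in>A n0. sublist (concat (replicate k u)) (comp_subst chi 1 n0 [c])"
  proof
    fix c assume c: "c \<in> A n0"
    have "b \<in> set (comp_subst chi (Suc j) n0 [c])" using n0 c ij by blast
    then have "sublist [b] (comp_subst chi (Suc j) n0 [c])"
      by (metis in_set_conv_decomp sublist_appendI append_Cons append_Nil)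
    then have "sublist (comp_subst chi 1 j [b]) (comp_subst chi 1 j (comp_subst chi (Suc j) n0 [c]))"
      by (rule comp_sublist)
    also have "comp_subst chi 1 j (comp_subst chi (Suc j) n0 [c]) = comp_subst chi 1 n0 [c]"
      by (rule comp_comp[symmetric]) (use n0 in auto)
    finally show "sublist (concat (replicate k u)) (comp_subst chi 1 n0 [c])"
      using s1 sublist_order.order_trans by blast
  qed
  then show ?thesis using une by blast
qed

lemma blocks:
  assumes v: "valid_sadic A chi" and "n0 \<le> n" "d \<in> A n"
  shows "\<exists>cs. cs \<noteq> [] \<and> set cs \<subseteq> A n0 \<and>
     comp_subst chi 1 n [d] = concat (map (\<lambda>c. comp_subst chi 1 n0 [c]) cs)"
proof -
  define cs where "cs = comp_subst chi (Suc n0) n [d]"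
  have "set cs \<subseteq> A n0 \<and> cs \<noteq> []"
    using comp_valid[OF v, of "Suc n0" n "[d]"] assms unfolding cs_def by auto
  moreover have "comp_subst chi 1 n [d] = comp_subst chi 1 n0 cs"
    unfolding cs_def by (rule comp_comp) (use assms in auto)
  ultimately show ?thesis using comp_concat by metis
qed

lemma window:
  assumes "\<forall>b\<in>set bs. sublist v b \<and> length b \<le> B" "1 \<le> B"
  shows "s + len \<le> length (concat bs) \<Longrightarrow> 2 * B \<le> len \<Longrightarrow> sublist v (take len (drop s (concat bs)))"
  using assms
proof (induction bs arbitrary: s)
  case Nil then show ?case by simp
next
  case (Cons b bs)
  show ?case
  proof (cases "length b \<le> s")
    case True
    then have "drop s (concat (b # bs)) = drop (s - length b) (concat bs)" by simp
    then show ?thesis using Cons True by simp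
  next
    case False
    define r where "r = concat bs"
    have lb: "length b \<le> B" using Cons by simp
    have eq: "take len (drop s (concat (b # bs))) = drop s b @ take (len - (length b - s)) r"
      using False lb Cons.prems(2) by (simp add: r_def)
    have "len - (length b - s) > 0" using lb Cons.prems False by linarith
    moreover have "len - (length b - s) \<le> length r" using Cons.prems False by (simp add: r_def)
    ultimately obtain c bs' where bs: "bs = c # bs'"
      by (cases bs) (auto simp: r_def)
    have lc: "length c \<le> B" "sublist v c" using Cons.prems bs by auto
    have "len - (length b - s) \<ge> length c" using lc lb Cons.prems by linarith
    then have "take (len - (length b - s)) r = c @ take (len - (length b - s) - length c) (concat bs')"
      by (simp add: r_def bs)
    then have "sublist v (take (len - (length b - s)) r)"
      using lc(2) sublist_order.order_trans by (metis sublist_append_rightI)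
    then show ?thesis unfolding eq using sublist_order.order_trans by (metis sublist_append_leftI)
  qed
qed

lemma concat_replicate_nth:
  assumes "u \<noteq> []" "t < k * length u"
  shows "concat (replicate k u) ! t = u ! (t mod length u)"
  using assms(2)
proof (induction k arbitrary: t)
  case 0 then show ?case by simp
next
  case (Suc k)
  show ?case
  proof (cases "t < length u")
    case True then show ?thesis by (simp add: nth_append)
  next
    case False
    then have "t - length u < k * length u" using Suc.prems by simp
    then have "concat (replicate k u) ! (t - length u) = u ! ((t - length u) mod length u)"
      using Suc.IH by blast
    moreover have "(t - length u) mod length u = t mod length u"
      using False by (simp add: le_mod_geq)
    ultimately show ?thesis using False by (simp add: nth_append)
  qed
qed

lemma shift_pow: "(shift ^^ n) x = (\<lambda>i. x (i + int n))"
  by (induction n) (auto simp: shift_def add.assoc)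


definition good :: "(nat \<Rightarrow> 'a set) \<Rightarrow> (nat \<Rightarrow> 'a \<Rightarrow> 'a list) \<Rightarrow> 'a list \<Rightarrow> bool" where
  "good A chi v \<longleftrightarrow> (\<forall>M N. \<exists>n\<ge>N. \<exists>a\<in>A n. \<exists>l r. sublist (l @ v @ r) (comp_subst chi 1 n [a])
      \<and> M \<le> length l \<and> M \<le> length r)"

definition ext_step :: "(nat \<Rightarrow> 'a set) \<Rightarrow> (nat \<Rightarrow> 'a \<Rightarrow> 'a list) \<Rightarrow> 'a list \<Rightarrow> 'a list" where
  "ext_step A chi v = (SOME w. \<exists>c d. w = c # v @ [d] \<and> good A chi w)"

lemma lengths:
  assumes v: "valid_sadic A chi" and pr: "primitive_sadic A chi"
    and h: "\<forall>k::nat. k \<ge> 1 \<longrightarrow> (\<exists>i j a b. 1 \<le> i \<and> i < j \<and> a \<in> A (i - 1) \<and> b \<in> A j \<and>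
            sublist (replicate k a) (comp_subst chi i j [b]))"
  shows "\<exists>n\<ge>N. \<exists>a\<in>A n. K \<le> length (comp_subst chi 1 n [a])"
proof -
  obtain u n0 where u: "u \<noteq> []" "\<forall>c\<in>A n0. sublist (concat (replicate (Suc K) u)) (comp_subst chi 1 n0 [c])"
    using core[OF v pr h, of "Suc K"] by auto
  define n where "n = max N n0"
  obtain a where a: "a \<in> A n" using v unfolding valid_sadic_def by blast
  obtain cs where cs: "cs \<noteq> []" "set cs \<subseteq> A n0"
     "comp_subst chi 1 n [a] = concat (map (\<lambda>c. comp_subst chi 1 n0 [c]) cs)"
    using blocks[OF v _ a, of n0] unfolding n_def by auto
  have hc: "hd cs \<in> A n0" using cs by auto
  have "length (concat (replicate (Suc K) u)) \<ge> Suc K"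
  proof -
    have "1 \<le> length u" using u(1) by (cases u) auto
    then have "Suc K * 1 \<le> Suc K * length u" by (rule mult_le_mono2)
    then show ?thesis by (simp add: length_concat sum_list_replicate)
  qed
  moreover have "length (concat (replicate (Suc K) u)) \<le> length (comp_subst chi 1 n0 [hd cs])"
    using u(2) hc sublist_length_le by blast
  moreover have "length (comp_subst chi 1 n0 [hd cs]) \<le> length (comp_subst chi 1 n [a])"
    using cs by (cases cs) auto
  ultimately show ?thesis using a unfolding n_def
    by (metis Suc_leD le_trans max.cobounded1)
qed

lemma good_Nil:
  assumes v: "valid_sadic A chi" and pr: "primitive_sadic A chi"
    and h: "\<forall>k::nat. k \<ge> 1 \<longrightarrow> (\<exists>i j a b. 1 \<le> i \<and> i < j \<and> a \<in> A (i - 1) \<and> b \<in> A j \<and>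
            sublist (replicate k a) (comp_subst chi i j [b]))"
  shows "good A chi []"
  unfolding good_def
proof (intro allI)
  fix M N
  obtain n a where na: "n \<ge> N" "a \<in> A n" "2 * M \<le> length (comp_subst chi 1 n [a])"
    using lengths[OF v pr h, of N "2 * M"] by blast
  define w where "w = comp_subst chi 1 n [a]"
  have "sublist (take M w @ [] @ drop M w) w" by simp
  moreover have "M \<le> length (take M w)" "M \<le> length (drop M w)" using na unfolding w_def by auto
  ultimately show "\<exists>n\<ge>N. \<exists>a\<in>A n. \<exists>l r. sublist (l @ [] @ r) (comp_subst chi 1 n [a]) \<and> M \<le> length l \<and> M \<le> length r"
    using na unfolding w_def by blast
qed

lemma comp_set0:
  assumes v: "valid_sadic A chi" and "a \<in> A n"
  shows "set (comp_subst chi 1 n [a]) \<subseteq> A 0"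
  using comp_valid[OF v, of 1 n "[a]"] assms by auto

lemma good_step:
  assumes v: "valid_sadic A chi" and g: "good A chi v"
  shows "\<exists>c d. good A chi (c # v @ [d])"
proof (rule ccontr)
  assume nc: "\<not> (\<exists>c d. good A chi (c # v @ [d]))"
  define S where "S = A 0 \<times> A 0"
  have fS: "finite S" using v unfolding S_def valid_sadic_def by auto
  have "\<forall>p\<in>S. \<exists>MN. \<forall>n\<ge>snd MN. \<forall>a\<in>A n. \<forall>l r. sublist (l @ (fst p # v @ [snd p]) @ r) (comp_subst chi 1 n [a])
      \<longrightarrow> \<not> (fst MN \<le> length l \<and> fst MN \<le> length r)"
  proof
    fix p assume "p \<in> S"
    have "\<not> good A chi (fst p # v @ [snd p])" using nc by blast
    then obtain M N where "\<forall>n\<ge>N. \<forall>a\<in>A n. \<forall>l r. sublist (l @ (fst p # v @ [snd p]) @ r) (comp_subst chi 1 n [a])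
      \<longrightarrow> \<not> (M \<le> length l \<and> M \<le> length r)" unfolding good_def by blast
    then show "\<exists>MN. \<forall>n\<ge>snd MN. \<forall>a\<in>A n. \<forall>l r. sublist (l @ (fst p # v @ [snd p]) @ r) (comp_subst chi 1 n [a])
      \<longrightarrow> \<not> (fst MN \<le> length l \<and> fst MN \<le> length r)" by (intro exI[of _ "(M, N)"]) simp
  qed
  then obtain f where f: "\<forall>p\<in>S. \<forall>n\<ge>snd (f p). \<forall>a\<in>A n. \<forall>l r. sublist (l @ (fst p # v @ [snd p]) @ r) (comp_subst chi 1 n [a])
      \<longrightarrow> \<not> (fst (f p) \<le> length l \<and> fst (f p) \<le> length r)" by metis
  define Ms where "Ms = (\<Sum>p\<in>S. fst (f p))"
  define Ns where "Ns = (\<Sum>p\<in>S. snd (f p))"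
  obtain n a l r where nalr: "n \<ge> Ns" "a \<in> A n" "sublist (l @ v @ r) (comp_subst chi 1 n [a])"
    "Suc Ms \<le> length l" "Suc Ms \<le> length r"
    using g unfolding good_def by blast
  define c where "c = last l"
  define d where "d = hd r"
  define l' where "l' = butlast l"
  define r' where "r' = tl r"
  have ln: "l \<noteq> []" "r \<noteq> []" using nalr by auto
  have lr: "l = l' @ [c]" "r = d # r'" using ln unfolding c_def d_def l'_def r'_def by auto
  have "set (l @ v @ r) \<subseteq> A 0"
    using set_mono_sublist[OF nalr(3)] comp_set0[OF v nalr(2)] by blast
  then have p: "(c, d) \<in> S" unfolding S_def using lr by auto
  have eq: "l' @ (c # v @ [d]) @ r' = l @ v @ r" using lr by simp
  have "fst (f (c, d)) \<le> Ms" unfolding Ms_def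
    using member_le_sum[of "(c,d)" S "\<lambda>p. fst (f p)"] p fS by simp
  moreover have "snd (f (c, d)) \<le> Ns" unfolding Ns_def
    using member_le_sum[of "(c,d)" S "\<lambda>p. snd (f p)"] p fS by simp
  moreover have "fst (f (c, d)) \<le> length l'" "fst (f (c, d)) \<le> length r'"
    using calculation nalr lr by auto
  moreover have "snd (f (c, d)) \<le> n" using calculation nalr by auto
  moreover have "sublist (l' @ (c # v @ [d]) @ r') (comp_subst chi 1 n [a])" using eq nalr by simp
  ultimately show False using f[rule_format, OF p, of n a l' r'] nalr by auto
qed


lemma ext_step_prop:
  assumes v: "valid_sadic A chi" and g: "good A chi w"
  shows "\<exists>c d. ext_step A chi w = c # w @ [d] \<and> good A chi (ext_step A chi w)"
proof -
  have "\<exists>w'. \<exists>c d. w' = c # w @ [d] \<and> good A chi w'" using good_step[OF v g] by blast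
  then have "\<exists>c d. ext_step A chi w = c # w @ [d] \<and> good A chi (ext_step A chi w)"
    unfolding ext_step_def by (rule someI_ex)
  then show ?thesis .
qed

lemma vs_props:
  assumes v: "valid_sadic A chi" and g0: "good A chi []"
  shows "good A chi ((ext_step A chi ^^ m) []) \<and> length ((ext_step A chi ^^ m) []) = 2 * m"
proof (induction m)
  case 0 then show ?case using g0 by simp
next
  case (Suc m)
  then obtain c d where "ext_step A chi ((ext_step A chi ^^ m) []) = c # (ext_step A chi ^^ m) [] @ [d]"
    "good A chi (ext_step A chi ((ext_step A chi ^^ m) []))"
    using ext_step_prop[OF v] by blast
  then show ?case using Suc by simp
qed

lemma vs_stable:
  assumes v: "valid_sadic A chi" and g0: "good A chi []"
  shows "m \<le> M \<Longrightarrow> - int m \<le> i \<Longrightarrow> i < int m \<Longrightarrow>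
    (ext_step A chi ^^ M) [] ! nat (i + int M) = (ext_step A chi ^^ m) [] ! nat (i + int m)"
proof (induction M rule: dec_induct)
  case base then show ?case by simp
next
  case (step M)
  let ?w = "(ext_step A chi ^^ M) []"
  obtain c d where cd: "ext_step A chi ?w = c # ?w @ [d]"
    using ext_step_prop[OF v] vs_props[OF v g0] by blast
  have len: "length ?w = 2 * M" using vs_props[OF v g0] by blast
  have n: "nat (i + int (Suc M)) = Suc (nat (i + int M))" using step by auto
  have lt: "nat (i + int M) < length ?w" using len step by auto
  have "(ext_step A chi ^^ Suc M) [] ! nat (i + int (Suc M)) = ?w ! nat (i + int M)"
    using cd n lt by (simp add: nth_append)
  then show ?case using step by simp
qed

lemma sadic_nonempty:
  assumes v: "valid_sadic A chi" and g0: "good A chi []"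
  shows "\<exists>x. x \<in> sadic_subshift A chi"
proof -
  define vs where "vs = (\<lambda>m. (ext_step A chi ^^ m) [])"
  define x where "x = (\<lambda>i::int. vs (nat \<bar>i\<bar> + 1) ! nat (i + int (nat \<bar>i\<bar> + 1)))"
  have xe: "x i = vs M ! nat (i + int M)" if "M \<ge> nat \<bar>i\<bar> + 1" for i M
    unfolding x_def vs_def using vs_stable[OF v g0 that, of i] by simp
  have "\<forall>i len N. \<exists>n\<ge>N. \<exists>a\<in>A n. sublist (word_at x i len) (comp_subst chi 1 n [a])"
  proof (intro allI)
    fix i len N
    define M where "M = nat \<bar>i\<bar> + len + 1"
    have lenM: "length (vs M) = 2 * M" using vs_props[OF v g0] unfolding vs_def by blast
    have "word_at x i len = take len (drop (nat (i + int M)) (vs M))"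
    proof (rule nth_equalityI)
      show "length (word_at x i len) = length (take len (drop (nat (i + int M)) (vs M)))"
        using lenM unfolding word_at_def M_def by auto
    next
      fix t assume "t < length (word_at x i len)"
      then have t: "t < len" unfolding word_at_def by simp
      have "word_at x i len ! t = x (i + int t)" using t unfolding word_at_def by simp
      also have "\<dots> = vs M ! nat (i + int t + int M)" by (rule xe) (use t in \<open>auto simp: M_def\<close>)
      also have "\<dots> = take len (drop (nat (i + int M)) (vs M)) ! t"
        using t lenM unfolding M_def by (auto simp: nat_add_distrib intro!: arg_cong[where f="(!) (vs _)"])
      finally show "word_at x i len ! t = take len (drop (nat (i + int M)) (vs M)) ! t" .
    qed
    then have s1: "sublist (word_at x i len) (vs M)"
      by (metis sublist_order.order_trans sublist_drop sublist_take)
    have "good A chi (vs M)" using vs_props[OF v g0] unfolding vs_def by blast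
    then obtain n a l r where "n \<ge> N" "a \<in> A n" "sublist (l @ vs M @ r) (comp_subst chi 1 n [a])"
      unfolding good_def by blast
    moreover have "sublist (vs M) (l @ vs M @ r)" by simp
    ultimately show "\<exists>n\<ge>N. \<exists>a\<in>A n. sublist (word_at x i len) (comp_subst chi 1 n [a])"
      using s1 sublist_order.order_trans by blast
  qed
  then show ?thesis unfolding sadic_subshift_def by blast
qed


theorem lemma2p5:
  fixes A :: "nat \<Rightarrow> 'a set" and chi :: "nat \<Rightarrow> 'a \<Rightarrow> 'a list"
  assumes "valid_sadic A chi"
    and "primitive_sadic A chi"
    and "aperiodic (sadic_subshift A chi)"
    and "\<forall>k::nat. k \<ge> 1 \<longrightarrow> (\<exists>i j a b. 1 \<le> i \<and> i < j \<and> a \<in> A (i - 1) \<and> b \<in> A j \<and>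
            sublist (replicate k a) (comp_subst chi i j [b]))"
  shows "\<not> linearly_recurrent (sadic_subshift A chi)"
proof
  note v = assms(1) and pr = assms(2) and h = assms(4)
  assume "linearly_recurrent (sadic_subshift A chi)"
  then obtain L :: nat where LR: "\<forall>x\<in>sadic_subshift A chi. \<forall>i. \<forall>n::nat. n \<ge> 1 \<longrightarrow>
        (\<forall>p. \<exists>q. p < q \<and> q \<le> p + int (L * n) \<and> word_at x q n = word_at x i n)"
    unfolding linearly_recurrent_def by blast
  define k where "k = 2 * L + 2"
  obtain u n0 where u: "u \<noteq> []" "\<forall>c\<in>A n0. sublist (concat (replicate k u)) (comp_subst chi 1 n0 [c])"
    using core[OF v pr h, of k] unfolding k_def by auto
  define p where "p = length u"
  define V where "V = concat (replicate k u)"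
  have p1: "1 \<le> p" using u(1) unfolding p_def by (cases u) auto
  have lenV: "length V = k * p" unfolding V_def p_def by (simp add: length_concat sum_list_replicate)
  have Vge: "1 \<le> length V" unfolding lenV k_def using p1 by simp
  define f where "f = (\<lambda>c. comp_subst chi 1 n0 [c])"
  define B where "B = (\<Sum>c\<in>A n0. length (f c))"
  have fin: "finite (A n0)" "A n0 \<noteq> {}" using v unfolding valid_sadic_def by auto
  have fB: "length (f c) \<le> B" if "c \<in> A n0" for c
    unfolding B_def using member_le_sum[of c "A n0" "\<lambda>c. length (f c)"] that fin by simp
  have B1: "1 \<le> B"
  proof -
    obtain c where c: "c \<in> A n0" using fin by blast
    have "length V \<le> length (f c)" using u(2) c sublist_length_le unfolding V_def f_def by blast
    then show ?thesis using fB[OF c] Vge by linarith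
  qed
  obtain x where x: "x \<in> sadic_subshift A chi" using sadic_nonempty[OF v good_Nil[OF v pr h]] by blast
  obtain n d where nd: "n \<ge> n0" "d \<in> A n" "sublist (word_at x 0 (2 * B)) (comp_subst chi 1 n [d])"
    using x unfolding sadic_subshift_def by blast
  obtain cs where cs: "comp_subst chi 1 n [d] = concat (map f cs)" "set cs \<subseteq> A n0"
    using blocks[OF v nd(1,2)] unfolding f_def by blast
  define W where "W = word_at x 0 (2 * B)"
  have lenW: "length W = 2 * B" unfolding W_def word_at_def by simp
  obtain ps ss where pss: "concat (map f cs) = ps @ W @ ss" using nd(3) cs(1) unfolding W_def sublist_def by auto
  have Wt: "W = take (2 * B) (drop (length ps) (concat (map f cs)))" using pss lenW by simp
  have "\<forall>b\<in>set (map f cs). sublist V b \<and> length b \<le> B"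
    using u(2) cs(2) fB unfolding V_def f_def by auto
  then have "sublist V (take (2 * B) (drop (length ps) (concat (map f cs))))"
    by (rule window[OF _ B1]) (use pss lenW in auto)
  then have "sublist V W" using Wt by simp
  then obtain ps2 ss2 where W2: "W = ps2 @ V @ ss2" unfolding sublist_def by blast
  define s where "s = int (length ps2)"
  have xV: "x (s + int t) = u ! (t mod p)" if t: "t < k * p" for t
  proof -
    have lt: "length ps2 + t < 2 * B" using W2 lenW lenV t by simp
    have "x (s + int t) = W ! (length ps2 + t)"
      using lt unfolding W_def word_at_def s_def by simp
    also have "\<dots> = V ! t" using W2 t lenV by (simp add: nth_append)
    also have "\<dots> = u ! (t mod p)" unfolding V_def p_def
      by (rule concat_replicate_nth[OF u(1)]) (use t p_def in simp)
    finally show ?thesis .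
  qed
  have per: "x (i + int p) = x i" for i
  proof -
    obtain q where q: "s - 1 < q" "q \<le> s - 1 + int (L * (p + 1))"
      "word_at x q (p + 1) = word_at x i (p + 1)"
      using LR x by (meson le_add2)
    have e0: "x q = x i" using arg_cong[OF q(3), of "\<lambda>w. w ! 0"] unfolding word_at_def by (simp del: upt_Suc)
    have ep: "x (q + int p) = x (i + int p)"
      using arg_cong[OF q(3), of "\<lambda>w. w ! p"] unfolding word_at_def by (simp del: upt_Suc)
    define r where "r = nat (q - s)"
    have qr: "q = s + int r" using q unfolding r_def by simp
    have r1: "int r \<le> int (L * (p + 1)) - 1" using q qr by simp
    have lp: "L \<le> L * p" using p1 by simp
    have "int r < int (L + L * p)" using r1 by (simp add: algebra_simps)
    then have rl: "r < L + L * p" by linarith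
    have "k * p = 2 * (L * p) + 2 * p" unfolding k_def by (simp add: algebra_simps)
    then have rk: "r + p < k * p" using lp rl p1 by linarith
    have "x q = u ! (r mod p)" using xV[of r] rk qr by simp
    moreover have "x (q + int p) = u ! ((r + p) mod p)" using xV[of "r + p"] rk qr by (simp add: add.assoc)
    ultimately show ?thesis using e0 ep by simp
  qed
  have "(shift ^^ p) x = x" unfolding shift_pow using per by (simp add: fun_eq_iff)
  then show False using assms(3) x p1 unfolding aperiodic_def by blast
qed

end
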